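(* Let $X$ be a Hausdorff topological space and $f:X\to X$ a continuous mapping. Suppose there exists $x_0\in X$ such that for each open cover $\mathcal{U}$ of $X$ there are $n\in\mathbb{N}_0$ and $U\in\mathcal{U}$ with $\{f^n(x_0),f^{n+1}(x_0)\}\subseteq U$. Then $f$ has a fixed point.
   Context: $\mathbb{N}_0=\{0,1,2,\dots\}$; $f^n$ denotes the $n$-fold iterate of $f$, with $f^0$ the identity. *)

theory Defs
  imports "HOL-Analysis.Analysis"
begin

end

theory Submission
  imports Defs
begin

theorem theorem3:
  fixes X :: "'a topology" and f :: "'a \<Rightarrow> 'a" and x0 :: 'a
  assumes "Hausdorff_space X"
    and "continuous_map X X f"
    and "x0 \<in> topspace X"
    and "\<forall>\<U>. (\<forall>U\<in>\<U>. openin X U) \<and> topspace X \<subseteq> \<Union>\<U> \<longrightarrow>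
           (\<exists>n::nat. \<exists>U\<in>\<U>. {(f ^^ n) x0, (f ^^ (Suc n)) x0} \<subseteq> U)"
  shows "\<exists>x\<in>topspace X. f x = x"
proof (rule ccontr)
  assume nf: "\<not> (\<exists>x\<in>topspace X. f x = x)"
  have "\<exists>W. openin X W \<and> x \<in> W \<and> (\<forall>y\<in>W. f y \<notin> W)" if x: "x \<in> topspace X" for x
  proof -
    have fx: "f x \<in> topspace X" using assms(2) x by (auto simp: continuous_map_def)
    have "f x \<noteq> x" using nf x by blast
    then obtain U V where UV: "openin X U" "openin X V" "x \<in> U" "f x \<in> V" "disjnt U V"
      using assms(1) x fx unfolding Hausdorff_space_def by metis
    define W where "W = {y \<in> topspace X. f y \<in> V} \<inter> U"
    have "openin X W" unfolding W_def
      using UV(1,2) assms(2) by (intro openin_Int) (auto simp: continuous_map_def)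
    moreover have "x \<in> W" using x UV unfolding W_def by auto
    moreover have "\<forall>y\<in>W. f y \<notin> W" using UV(5) unfolding W_def disjnt_def by auto
    ultimately show ?thesis by blast
  qed
  then obtain W where W: "\<And>x. x \<in> topspace X \<Longrightarrow> openin X (W x) \<and> x \<in> W x \<and> (\<forall>y\<in>W x. f y \<notin> W x)"
    by metis
  have "(\<forall>U\<in>W ` topspace X. openin X U) \<and> topspace X \<subseteq> \<Union>(W ` topspace X)"
    using W by blast
  then obtain n U where "U \<in> W ` topspace X" "{(f ^^ n) x0, (f ^^ (Suc n)) x0} \<subseteq> U"
    using assms(4) by metis
  then show False using W by auto
qed

end
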